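(* Let $\rho$ be a positive semidefinite operator on $h$ with $\mathrm{tr}\,\rho>0$ and let $\rho_0$ be $\rho$ on slice $0$. Let $\mathcal H_E\cong\mathcal H$ be an environment with identity $\mathbb 1_E$, and let $|\Phi^+\rangle=\sum_{\mathbf i}|\mathbf i\rangle|\mathbf i\rangle_E$ (sum over the product basis). Define $$|\Psi\rangle=\big(\rho_0e^{i\tilde{\mathcal S}/2}\otimes\mathbb 1_E\big)|\Phi^+\rangle,\qquad |\overline\Psi\rangle=\big(e^{i\tilde{\mathcal S}/2}\otimes\mathbb 1_E\big)^\dagger|\Phi^+\rangle,\qquad R=\frac{|\Psi\rangle\langle\overline\Psi|}{\langle\overline\Psi|\Psi\rangle}.$$ Then, for all operators $O^{(0)},\dots,O^{(N-1)}$ on $h$, $$\mathrm{Tr}\Big[R\Big(\big(\textstyle\bigotimes_tO^{(t)}_t\big)\otimes\mathbb 1_E\Big)\Big]=\frac{\langle\overline\Psi|\big(\bigotimes_tO^{(t)}_t\big)\otimes\mathbb 1_E|\Psi\rangle}{\langle\overline\Psi|\Psi\rangle}=\frac{\mathrm{tr}\big[\rho\,O^{(N-1)}(\epsilon(N-1))\cdots O^{(1)}(\epsilon)\,O^{(0)}(0)\big]}{\mathrm{tr}[\rho]},$$ where $O(s)=e^{isH}Oe^{-isH}$.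
   Context: Bosonic-like setting. Fix integers $d\ge1$, $N\ge1$, a real $\epsilon>0$, and set $T=\epsilon N$. Let $h$ be a $d$-dimensional Hilbert space with orthonormal basis $\{|i\rangle\}$ and trace $\mathrm{tr}$. The space $\mathcal H$. Let $\mathcal H=h^{\otimes N}$, with factors indexed by slices $t=0,\dots,N-1$. For an operator $A$ on $h$, $A_t$ denotes $A$ on factor $t$, and $\bigotimes_tO^{(t)}_t=O^{(0)}\otimes\dots\otimes O^{(N-1)}$. Time translation. Let $C$ be the cyclic shift $C|i_0i_1\dots i_{N-1}\rangle=|i_{N-1}i_0\dots i_{N-2}\rangle$. Fix a hermitian $\mathcal P$ with $e^{i\epsilon\mathcal P}=C$. Quantum action. Let $H$ be a hermitian operator on $h$. Define $$e^{i\mathcal S}=C\prod_te^{-i\epsilon H_t},\qquad \mathcal V=\prod_te^{i\epsilon tH_t},$$ $$e^{i\tilde{\mathcal S}}=e^{iTH_0}e^{i\mathcal S}\ \big(=\mathcal V^\dagger C\mathcal V\big),\qquad e^{i\tilde{\mathcal S}/2}=\mathcal V^\dagger e^{i\epsilon\mathcal P/2}\mathcal V.$$ *)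

theory Defs
  imports "HOL-Analysis.Analysis" "Jordan_Normal_Form.Matrix"
begin

text \<open>The space h has basis indexed by 0..<d; H = h^(tensor N) has basis indexed by
  0..<d^N, where basis index x corresponds to the product state
  with slice-t digit (x div d^t) mod d.\<close>

definition digit :: "nat \<Rightarrow> nat \<Rightarrow> nat \<Rightarrow> nat" where
  "digit d x t = (x div d ^ t) mod d"

definition cadj :: "complex mat \<Rightarrow> complex mat" where
  "cadj A = mat (dim_col A) (dim_row A) (\<lambda>(i,j). cnj (A $$ (j,i)))"

definition ctrace :: "complex mat \<Rightarrow> complex" where
  "ctrace A = (\<Sum>i<dim_row A. A $$ (i,i))"

definition hermitian :: "complex mat \<Rightarrow> bool" where
  "hermitian A \<longleftrightarrow> square_mat A \<and> cadj A = A"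

definition psd :: "complex mat \<Rightarrow> bool" where
  "psd A \<longleftrightarrow> hermitian A \<and>
     (\<forall>v \<in> carrier_vec (dim_row A). Re (conjugate v \<bullet> (A *\<^sub>v v)) \<ge> 0)"

definition mexp :: "complex mat \<Rightarrow> complex mat" where
  "mexp A = mat (dim_row A) (dim_row A)
     (\<lambda>(i,j). \<Sum>k. (A ^\<^sub>m k) $$ (i,j) / of_nat (fact k))"

definition tensor_ops :: "nat \<Rightarrow> nat \<Rightarrow> (nat \<Rightarrow> complex mat) \<Rightarrow> complex mat" where
  "tensor_ops d N Ops = mat (d ^ N) (d ^ N)
     (\<lambda>(x,y). \<Prod>t<N. Ops t $$ (digit d x t, digit d y t))"

definition on_slice :: "nat \<Rightarrow> nat \<Rightarrow> nat \<Rightarrow> complex mat \<Rightarrow> complex mat" where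
  "on_slice d N t A = tensor_ops d N (\<lambda>s. if s = t then A else 1\<^sub>m d)"

text \<open>cyclic shift C |i_0 i_1 ... i_(N-1)> = |i_(N-1) i_0 ... i_(N-2)>\<close>
definition cshift :: "nat \<Rightarrow> nat \<Rightarrow> complex mat" where
  "cshift d N = mat (d ^ N) (d ^ N)
     (\<lambda>(y,x). if (\<forall>t<N. digit d y t = digit d x ((t + N - 1) mod N)) then 1 else 0)"

definition kron :: "complex mat \<Rightarrow> complex mat \<Rightarrow> complex mat" where
  "kron A B = mat (dim_row A * dim_row B) (dim_col A * dim_col B)
     (\<lambda>(i,j). A $$ (i div dim_row B, j div dim_col B) * B $$ (i mod dim_row B, j mod dim_col B))"

text \<open>|Phi+> = sum_i |i>|i>_E in H (x) H_E, dimension D*D, index x*D+e\<close>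
definition phi_plus :: "nat \<Rightarrow> complex vec" where
  "phi_plus D = vec (D * D) (\<lambda>k. if k div D = k mod D then 1 else 0)"

definition ket_bra :: "complex vec \<Rightarrow> complex vec \<Rightarrow> complex mat" where
  "ket_bra u w = mat (dim_vec u) (dim_vec w) (\<lambda>(i,j). u $ i * cnj (w $ j))"

definition braket :: "complex vec \<Rightarrow> complex vec \<Rightarrow> complex" where
  "braket w u = conjugate w \<bullet> u"

definition Vop :: "nat \<Rightarrow> nat \<Rightarrow> real \<Rightarrow> complex mat \<Rightarrow> complex mat" where
  "Vop d N \<epsilon> H = foldr (\<lambda>t M. on_slice d N t (mexp ((\<i> * of_real (\<epsilon> * real t)) \<cdot>\<^sub>m H)) * M)
                      [0..<N] (1\<^sub>m (d ^ N))"

text \<open>e^{i S~/2} = V^dagger e^{i eps P/2} V\<close>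
definition half_Stilde :: "nat \<Rightarrow> nat \<Rightarrow> real \<Rightarrow> complex mat \<Rightarrow> complex mat \<Rightarrow> complex mat" where
  "half_Stilde d N \<epsilon> H P =
     cadj (Vop d N \<epsilon> H) * mexp ((\<i> * of_real (\<epsilon> / 2)) \<cdot>\<^sub>m P) * Vop d N \<epsilon> H"

definition heis :: "complex mat \<Rightarrow> real \<Rightarrow> complex mat \<Rightarrow> complex mat" where
  "heis H s A = mexp ((\<i> * of_real s) \<cdot>\<^sub>m H) * A * mexp ((- \<i> * of_real s) \<cdot>\<^sub>m H)"

definition time_ordered :: "nat \<Rightarrow> nat \<Rightarrow> real \<Rightarrow> complex mat \<Rightarrow> (nat \<Rightarrow> complex mat) \<Rightarrow> complex mat" where
  "time_ordered d N \<epsilon> H Ops =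
     foldr (\<lambda>t M. heis H (\<epsilon> * real t) (Ops t) * M) (rev [0..<N]) (1\<^sub>m d)"

end

theory Submission
  imports Defs
begin

lemma mult_entry:
  assumes "A \<in> carrier_mat n m" "B \<in> carrier_mat m p" "i < n" "j < p"
  shows "(A * B) $$ (i,j) = (\<Sum>k<m. A $$ (i,k) * B $$ (k,j))"
  using assms by (auto simp: scalar_prod_def lessThan_atLeast0 intro!: sum.cong)

lemma ctrace_comm:
  assumes "A \<in> carrier_mat n m" "B \<in> carrier_mat m n"
  shows "ctrace (A * B) = ctrace (B * A)"
proof -
  have "ctrace (A * B) = (\<Sum>i<n. \<Sum>k<m. A $$ (i,k) * B $$ (k,i))"
  proof -
    have e: "\<And>i. i < n \<Longrightarrow> (A * B) $$ (i,i) = (\<Sum>k<m. A $$ (i,k) * B $$ (k,i))"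
      using mult_entry[OF assms] by blast
    show ?thesis using assms unfolding ctrace_def by (simp del: index_mult_mat add: index_mult_mat(2,3) e)
  qed
  also have "\<dots> = (\<Sum>k<m. \<Sum>i<n. B $$ (k,i) * A $$ (i,k))"
    by (subst sum.swap) (simp add: mult.commute)
  also have "\<dots> = ctrace (B * A)"
  proof -
    have e: "\<And>i. i < m \<Longrightarrow> (B * A) $$ (i,i) = (\<Sum>k<n. B $$ (i,k) * A $$ (k,i))"
      using mult_entry[OF assms(2,1)] by blast
    show ?thesis using assms unfolding ctrace_def by (simp del: index_mult_mat add: index_mult_mat(2,3) e)
  qed
  finally show ?thesis .
qed

lemma digit_lt: "d \<ge> 1 \<Longrightarrow> digit d x t < d"
  by (simp add: digit_def)

lemma digit_high_low:
  assumes "z < d ^ n" "c < d"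
  shows "t < n \<Longrightarrow> digit d (z + d ^ n * c) t = digit d z t"
    and "digit d (z + d ^ n * c) n = c"
proof -
  assume t: "t < n"
  obtain k where k: "n = t + Suc k" using t less_imp_add_positive by (metis add_Suc_right less_iff_Suc_add add.commute)
  have dpos: "d > 0" using assms by auto
  have "(z + d ^ n * c) div d ^ t = z div d ^ t + d ^ Suc k * c"
  proof -
    have eq: "d ^ n * c = d ^ t * (d ^ Suc k * c)" by (simp add: k power_add)
    have X: "(z + d ^ t * X) div d ^ t = z div d ^ t + X" for X using dpos by simp
    show ?thesis unfolding eq by (rule X)
  qed
  then show "digit d (z + d ^ n * c) t = digit d z t"
    by (simp add: digit_def mult.assoc)
next
  have "d > 0" using assms by auto
  then have "(z + d ^ n * c) div d ^ n = c" using assms by simp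
  then show "digit d (z + d ^ n * c) n = c" using assms by (simp add: digit_def)
qed

lemma sum_split_high:
  fixes m k :: nat
  shows "(\<Sum>z<m * k. f z) = (\<Sum>c<k. \<Sum>z<m. f (z + m * c))"
proof (induction k)
  case 0 then show ?case by simp
next
  case (Suc k)
  have "(\<Sum>z<m * Suc k. f z) = (\<Sum>z\<in>{0..<m*k}. f z) + (\<Sum>z\<in>{m*k..<m*k+m}. f z)"
    by (simp add: lessThan_atLeast0 sum.atLeastLessThan_concat add.commute)
  also have "(\<Sum>z\<in>{m*k..<m*k+m}. f z) = (\<Sum>z<m. f (z + m * k))"
    using sum.shift_bounds_nat_ivl[of f 0 "m*k" m] by (simp add: lessThan_atLeast0 add.commute)
  finally show ?case using Suc by (simp add: lessThan_atLeast0)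
qed

lemma sum_digits:
  fixes h :: "nat \<Rightarrow> nat \<Rightarrow> 'a::comm_semiring_1"
  shows "(\<Sum>z<d ^ n. \<Prod>t<n. h t (digit d z t)) = (\<Prod>t<n. \<Sum>c<d. h t c)"
proof (induction n)
  case 0 then show ?case by simp
next
  case (Suc n)
  have "(\<Sum>z<d ^ Suc n. \<Prod>t<Suc n. h t (digit d z t))
      = (\<Sum>c<d. \<Sum>z<d ^ n. \<Prod>t<Suc n. h t (digit d (z + d ^ n * c) t))"
    unfolding power_Suc2 sum_split_high[where m="d ^ n" and k=d] by simp
  also have "\<dots> = (\<Sum>c<d. \<Sum>z<d ^ n. (\<Prod>t<n. h t (digit d z t)) * h n c)"
  proof (intro sum.cong refl)
    fix c z assume c: "c \<in> {..<d}" and z: "z \<in> {..<d ^ n}"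
    have "(\<Prod>t<n. h t (digit d (z + d ^ n * c) t)) = (\<Prod>t<n. h t (digit d z t))"
      using c z by (intro prod.cong refl) (simp add: digit_high_low)
    then show "(\<Prod>t<Suc n. h t (digit d (z + d ^ n * c) t)) = (\<Prod>t<n. h t (digit d z t)) * h n c"
      using c z by (simp add: digit_high_low)
  qed
  also have "\<dots> = (\<Sum>c<d. h n c) * (\<Sum>z<d ^ n. \<Prod>t<n. h t (digit d z t))"
    by (simp add: sum_distrib_left sum_distrib_right mult.commute sum.swap[where A="{..<d}"])
  finally show ?case using Suc by (simp add: mult.commute)
qed

lemma tensor_ops_entry:
  "x < d ^ N \<Longrightarrow> y < d ^ N \<Longrightarrow>
   tensor_ops d N F $$ (x,y) = (\<Prod>t<N. F t $$ (digit d x t, digit d y t))"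
  by (simp add: tensor_ops_def)

lemma tensor_ops_carrier[simp]: "tensor_ops d N F \<in> carrier_mat (d ^ N) (d ^ N)"
  by (simp add: tensor_ops_def)

lemma tensor_ops_cong: "(\<And>t. t < N \<Longrightarrow> F t = G t) \<Longrightarrow> tensor_ops d N F = tensor_ops d N G"
  unfolding tensor_ops_def by (intro eq_matI) auto

lemma tensor_ops_mult:
  assumes d: "d \<ge> 1" and F: "\<And>t. t < N \<Longrightarrow> F t \<in> carrier_mat d d"
    and G: "\<And>t. t < N \<Longrightarrow> G t \<in> carrier_mat d d"
  shows "tensor_ops d N F * tensor_ops d N G = tensor_ops d N (\<lambda>t. F t * G t)"
proof (rule eq_matI)
  fix x y assume x: "x < dim_row (tensor_ops d N (\<lambda>t. F t * G t))"
    and y: "y < dim_col (tensor_ops d N (\<lambda>t. F t * G t))"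
  then have x: "x < d ^ N" and y: "y < d ^ N" by (auto simp: tensor_ops_def)
  have "(tensor_ops d N F * tensor_ops d N G) $$ (x,y)
     = (\<Sum>z<d ^ N. tensor_ops d N F $$ (x,z) * tensor_ops d N G $$ (z,y))"
    using x y by (intro mult_entry) auto
  also have "\<dots> = (\<Sum>z<d ^ N. \<Prod>t<N. F t $$ (digit d x t, digit d z t) * G t $$ (digit d z t, digit d y t))"
    using x y by (intro sum.cong refl) (simp add: tensor_ops_entry prod.distrib)
  also have "\<dots> = (\<Prod>t<N. \<Sum>c<d. F t $$ (digit d x t, c) * G t $$ (c, digit d y t))"
    by (rule sum_digits)
  also have "\<dots> = (\<Prod>t<N. (F t * G t) $$ (digit d x t, digit d y t))"
    using d by (intro prod.cong refl, subst mult_entry[OF F G]) (auto simp: digit_lt)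
  also have "\<dots> = tensor_ops d N (\<lambda>t. F t * G t) $$ (x,y)"
    using x y by (simp add: tensor_ops_entry)
  finally show "(tensor_ops d N F * tensor_ops d N G) $$ (x,y) = tensor_ops d N (\<lambda>t. F t * G t) $$ (x,y)" .
qed (auto simp: tensor_ops_def)

lemma digit_Suc: "digit d x (Suc t) = digit d (x div d) t"
  by (simp add: digit_def div_mult2_eq mult.commute)

lemma digits_inj:
  assumes "d \<ge> 1" "x < d ^ N" "y < d ^ N" "\<forall>t<N. digit d x t = digit d y t"
  shows "x = y"
  using assms(2-4)
proof (induction N arbitrary: x y)
  case 0 then show ?case by simp
next
  case (Suc N)
  have "x div d < d ^ N" "y div d < d ^ N" using Suc.prems assms(1)
    by (auto simp: less_mult_imp_div_less mult.commute power_Suc2)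
  moreover have "\<forall>t<N. digit d (x div d) t = digit d (y div d) t"
    using Suc.prems(3) by (auto simp: digit_Suc[symmetric])
  ultimately have "x div d = y div d" using Suc.IH by blast
  moreover have "x mod d = y mod d" using Suc.prems(3) by (auto simp: digit_def dest: spec[of _ 0])
  ultimately show ?case by (metis div_mult_mod_eq)
qed

lemma tensor_ops_one:
  assumes "d \<ge> 1"
  shows "tensor_ops d N (\<lambda>_. 1\<^sub>m d) = 1\<^sub>m (d ^ N)"
proof (rule eq_matI)
  fix x y assume "x < dim_row (1\<^sub>m (d ^ N))" "y < dim_col (1\<^sub>m (d ^ N))"
  then have x: "x < d ^ N" and y: "y < d ^ N" by auto
  have "tensor_ops d N (\<lambda>_. 1\<^sub>m d) $$ (x,y) = (\<Prod>t<N. if digit d x t = digit d y t then 1 else 0)"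
    using x y assms by (simp add: tensor_ops_entry digit_lt)
  also have "\<dots> = (if x = y then 1 else 0)"
  proof (cases "x = y")
    case True then show ?thesis by simp
  next
    case False
    then obtain t where "t < N" "digit d x t \<noteq> digit d y t" using digits_inj[OF assms x y] by blast
    then show ?thesis using False by (auto intro!: prod_zero)
  qed
  finally show "tensor_ops d N (\<lambda>_. 1\<^sub>m d) $$ (x,y) = 1\<^sub>m (d ^ N) $$ (x,y)" using x y by simp
qed (auto simp: tensor_ops_def)

lemma on_slice_carrier[simp]: "on_slice d N t A \<in> carrier_mat (d ^ N) (d ^ N)"
  by (simp add: on_slice_def)

lemma foldr_on_slice:
  assumes d: "d \<ge> 1" and W: "\<And>t. W t \<in> carrier_mat d d" and dist: "distinct xs"
  shows "foldr (\<lambda>t M. on_slice d N t (W t) * M) xs (1\<^sub>m (d ^ N))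
       = tensor_ops d N (\<lambda>s. if s \<in> set xs then W s else 1\<^sub>m d)"
  using dist
proof (induction xs)
  case Nil then show ?case using tensor_ops_one[OF d] by simp
next
  case (Cons t xs)
  have "foldr (\<lambda>t M. on_slice d N t (W t) * M) (t # xs) (1\<^sub>m (d ^ N))
     = tensor_ops d N (\<lambda>s. if s = t then W t else 1\<^sub>m d) * tensor_ops d N (\<lambda>s. if s \<in> set xs then W s else 1\<^sub>m d)"
    using Cons by (simp add: on_slice_def)
  also have "\<dots> = tensor_ops d N (\<lambda>s. (if s = t then W t else 1\<^sub>m d) * (if s \<in> set xs then W s else 1\<^sub>m d))"
    using W by (intro tensor_ops_mult[OF d]) auto
  also have "\<dots> = tensor_ops d N (\<lambda>s. if s \<in> set (t # xs) then W s else 1\<^sub>m d)"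
    using Cons.prems W by (intro tensor_ops_cong) (auto simp: W[THEN carrier_matD(1)] W[THEN carrier_matD(2)])
  finally show ?case .
qed

lemma if_all_prod:
  fixes N :: nat
  shows "(if \<forall>t<N. P t then (1::'a::comm_semiring_1) else 0) = (\<Prod>t<N. if P t then 1 else 0)"
proof (cases "\<forall>t<N. P t")
  case True then show ?thesis by simp
next
  case False
  then obtain t where t: "t < N" "\<not> P t" by auto
  have "(\<Prod>t<N. if P t then (1::'a) else 0) = 0"
    by (rule prod_zero) (use t in auto)
  then show ?thesis using False by simp
qed

lemma sum_delta_mult:
  fixes k d :: nat
  assumes "k < d"
  shows "(\<Sum>c<d. (if c = k then 1 else 0) * (f c::'a::comm_semiring_1)) = f k"
proof -
  have "(\<Sum>c<d. (if c = k then 1 else 0) * f c) = (\<Sum>c<d. if c = k then f c else 0)"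
    by (intro sum.cong) auto
  also have "\<dots> = f k" using assms by (simp add: sum.delta)
  finally show ?thesis .
qed

lemma ctrace_cshift:
  assumes d: "d \<ge> 1" and A: "\<And>t. t < N \<Longrightarrow> A t \<in> carrier_mat d d"
  shows "ctrace (cshift d N * tensor_ops d N A)
       = (\<Sum>z<d ^ N. \<Prod>t<N. A t $$ (digit d z t, digit d z ((t + N - 1) mod N)))"
proof -
  let ?s = "\<lambda>z t. digit d z ((t + N - 1) mod N)"
  have C: "cshift d N \<in> carrier_mat (d ^ N) (d ^ N)" by (simp add: cshift_def)
  have "ctrace (cshift d N * tensor_ops d N A)
      = (\<Sum>x<d ^ N. \<Sum>z<d ^ N. cshift d N $$ (x,z) * tensor_ops d N A $$ (z,x))"
    unfolding ctrace_def using C by (intro sum.cong) (auto simp: mult_entry[OF C tensor_ops_carrier])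
  also have "\<dots> = (\<Sum>z<d ^ N. \<Sum>x<d ^ N. \<Prod>t<N. (if digit d x t = ?s z t then 1 else 0) * A t $$ (digit d z t, digit d x t))"
    by (subst sum.swap, intro sum.cong refl)
       (simp add: cshift_def tensor_ops_entry if_all_prod prod.distrib)
  also have "\<dots> = (\<Sum>z<d ^ N. \<Prod>t<N. \<Sum>c<d. (if c = ?s z t then 1 else 0) * A t $$ (digit d z t, c))"
    by (intro sum.cong refl) (rule sum_digits)
  also have "\<dots> = (\<Sum>z<d ^ N. \<Prod>t<N. A t $$ (digit d z t, ?s z t))"
    using d by (intro sum.cong prod.cong refl sum_delta_mult) (simp add: digit_lt)
  finally show ?thesis .
qed

lemma foldr_carrier:
  fixes B :: "nat \<Rightarrow> complex mat"
  shows "(\<And>t. t \<in> set xs \<Longrightarrow> B t \<in> carrier_mat d d) \<Longrightarrow>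
   foldr (\<lambda>t M. B t * M) xs (1\<^sub>m d) \<in> carrier_mat d d"
  by (induction xs) (auto intro!: mult_carrier_mat)

lemma digit_split_gen:
  "z < d ^ n \<Longrightarrow> c < d \<Longrightarrow> t \<le> n \<Longrightarrow> digit d (z + d ^ n * c) t = (if t = n then c else digit d z t)"
  by (auto simp: digit_high_low)

lemma chain:
  fixes B :: "nat \<Rightarrow> complex mat"
  assumes d: "d \<ge> 1" and B: "\<And>t. t \<le> n \<Longrightarrow> B t \<in> carrier_mat d d" and a: "a < d" and b: "b < d"
  shows "foldr (\<lambda>t M. B t * M) (rev [0..<Suc n]) (1\<^sub>m d) $$ (a,b)
       = (\<Sum>z<d ^ n. \<Prod>t<Suc n. B t $$ (if t = n then a else digit d z t, if t = 0 then b else digit d z (t - 1)))"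
  using B a
proof (induction n arbitrary: a)
  case 0
  then show ?case using b by (simp add: right_mult_one_mat'[of "B 0"])
next
  case (Suc n)
  let ?F = "foldr (\<lambda>t M. B t * M) (rev [0..<Suc n]) (1\<^sub>m d)"
  have F: "?F \<in> carrier_mat d d" using Suc.prems by (intro foldr_carrier) auto
  have Bn: "B (Suc n) \<in> carrier_mat d d" using Suc.prems by auto
  have "foldr (\<lambda>t M. B t * M) (rev [0..<Suc (Suc n)]) (1\<^sub>m d) $$ (a,b) = (B (Suc n) * ?F) $$ (a,b)"
    by simp
  also have "\<dots> = (\<Sum>c<d. B (Suc n) $$ (a,c) * ?F $$ (c,b))"
    using Suc.prems b by (intro mult_entry[OF Bn F]) auto
  also have "\<dots> = (\<Sum>c<d. \<Sum>z<d ^ n. (\<Prod>t<Suc n. B t $$ (if t = n then c else digit d z t, if t = 0 then b else digit d z (t - 1))) * B (Suc n) $$ (a,c))"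
  proof -
    have IH: "\<And>c. c < d \<Longrightarrow> ?F $$ (c,b) = (\<Sum>z<d ^ n. \<Prod>t<Suc n. B t $$ (if t = n then c else digit d z t, if t = 0 then b else digit d z (t - 1)))"
      by (rule Suc.IH) (use Suc.prems in auto)
    show ?thesis by (intro sum.cong refl) (simp del: upt_Suc add: IH sum_distrib_left mult.commute)
  qed
  also have "\<dots> = (\<Sum>c<d. \<Sum>z<d ^ n. \<Prod>t<Suc (Suc n). B t $$ (if t = Suc n then a else digit d (z + d ^ n * c) t, if t = 0 then b else digit d (z + d ^ n * c) (t - 1)))"
  proof (intro sum.cong refl)
    fix c z assume c: "c \<in> {..<d}" and z: "z \<in> {..<d ^ n}"
    have "(\<Prod>t<Suc n. B t $$ (if t = Suc n then a else digit d (z + d ^ n * c) t, if t = 0 then b else digit d (z + d ^ n * c) (t - 1)))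
        = (\<Prod>t<Suc n. B t $$ (if t = n then c else digit d z t, if t = 0 then b else digit d z (t - 1)))"
      using c z by (intro prod.cong refl) (auto simp: digit_split_gen)
    then show "(\<Prod>t<Suc n. B t $$ (if t = n then c else digit d z t, if t = 0 then b else digit d z (t - 1))) * B (Suc n) $$ (a,c)
        = (\<Prod>t<Suc (Suc n). B t $$ (if t = Suc n then a else digit d (z + d ^ n * c) t, if t = 0 then b else digit d (z + d ^ n * c) (t - 1)))"
      using c z by (simp add: digit_high_low)
  qed
  also have "\<dots> = (\<Sum>z<d ^ Suc n. \<Prod>t<Suc (Suc n). B t $$ (if t = Suc n then a else digit d z t, if t = 0 then b else digit d z (t - 1)))"
    unfolding power_Suc2 sum_split_high[where m="d ^ n" and k=d] by simp
  finally show ?case .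
qed

lemma mod_pred: "t < Suc n \<Longrightarrow> (t + n) mod Suc n = (if t = 0 then n else t - 1)"
proof (cases t)
  case (Suc s)
  assume "t < Suc n"
  then have "t + n = (t - 1) + Suc n" "t - 1 < Suc n" using Suc by auto
  then have "(t + n) mod Suc n = t - 1" by (metis mod_add_self2 mod_less)
  then show ?thesis using Suc by simp
qed simp

lemma trace_chain:
  fixes B :: "nat \<Rightarrow> complex mat"
  assumes d: "d \<ge> 1" and B: "\<And>t. t \<le> n \<Longrightarrow> B t \<in> carrier_mat d d"
  shows "(\<Sum>z<d ^ Suc n. \<Prod>t<Suc n. B t $$ (digit d z t, digit d z ((t + Suc n - 1) mod Suc n)))
       = ctrace (foldr (\<lambda>t M. B t * M) (rev [0..<Suc n]) (1\<^sub>m d))"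
proof -
  let ?F = "foldr (\<lambda>t M. B t * M) (rev [0..<Suc n]) (1\<^sub>m d)"
  have F: "?F \<in> carrier_mat d d" using B by (intro foldr_carrier) auto
  have "ctrace ?F = (\<Sum>a<d. \<Sum>z<d ^ n. \<Prod>t<Suc n. B t $$ (if t = n then a else digit d z t, if t = 0 then a else digit d z (t - 1)))"
  proof -
    have e: "\<And>a. a < d \<Longrightarrow> ?F $$ (a,a) = (\<Sum>z<d ^ n. \<Prod>t<Suc n. B t $$ (if t = n then a else digit d z t, if t = 0 then a else digit d z (t - 1)))"
      by (rule chain[OF d B]) auto
    have "ctrace ?F = (\<Sum>a<d. ?F $$ (a,a))" using F unfolding ctrace_def by (simp del: upt_Suc)
    then show ?thesis by (simp del: upt_Suc add: e)
  qed
  also have "\<dots> = (\<Sum>a<d. \<Sum>z<d ^ n. \<Prod>t<Suc n. B t $$ (digit d (z + d ^ n * a) t, digit d (z + d ^ n * a) ((t + Suc n - 1) mod Suc n)))"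
    by (intro sum.cong prod.cong refl) (auto simp: mod_pred digit_split_gen)
  also have "\<dots> = (\<Sum>z<d ^ Suc n. \<Prod>t<Suc n. B t $$ (digit d z t, digit d z ((t + Suc n - 1) mod Suc n)))"
    unfolding power_Suc2 sum_split_high[where m="d ^ n" and k=d] by simp
  finally show ?thesis by simp
qed

lemma pow_mat_add:
  fixes A :: "'a::semiring_1 mat"
  assumes A: "A \<in> carrier_mat n n"
  shows "A ^\<^sub>m p * A ^\<^sub>m q = A ^\<^sub>m (p + q)"
proof (induction q)
  case 0 then show ?case using A by simp
next
  case (Suc q)
  have "A ^\<^sub>m p * A ^\<^sub>m Suc q = A ^\<^sub>m p * (A ^\<^sub>m q * A)" by simp
  also have "\<dots> = (A ^\<^sub>m p * A ^\<^sub>m q) * A"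
    using A by (intro assoc_mult_mat[symmetric]) auto
  finally show ?case using Suc by simp
qed

lemma smult_pow:
  fixes A :: "'a::comm_ring_1 mat"
  assumes A: "A \<in> carrier_mat n n"
  shows "(z \<cdot>\<^sub>m A) ^\<^sub>m k = z ^ k \<cdot>\<^sub>m (A ^\<^sub>m k)"
proof (induction k)
  case 0 then show ?case using A by (intro eq_matI) auto
next
  case (Suc k)
  have "(z \<cdot>\<^sub>m A) ^\<^sub>m Suc k = (z ^ k \<cdot>\<^sub>m (A ^\<^sub>m k)) * (z \<cdot>\<^sub>m A)" using Suc by simp
  also have "\<dots> = z ^ k \<cdot>\<^sub>m (A ^\<^sub>m k * (z \<cdot>\<^sub>m A))"
    using A by (intro mult_smult_assoc_mat) auto
  also have "A ^\<^sub>m k * (z \<cdot>\<^sub>m A) = z \<cdot>\<^sub>m (A ^\<^sub>m k * A)"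
    using A by (intro mult_smult_distrib) auto
  finally show ?case using A by (intro eq_matI) auto
qed

definition abs_sum :: "complex mat \<Rightarrow> nat \<Rightarrow> real" where
  "abs_sum A n = (\<Sum>i<n. \<Sum>j<n. norm (A $$ (i,j)))"

lemma pow_bound:
  assumes A: "A \<in> carrier_mat n n" and i: "i < n" and j: "j < n"
  shows "norm ((A ^\<^sub>m k) $$ (i,j)) \<le> abs_sum A n ^ k"
  using i j
proof (induction k arbitrary: i j)
  case 0 then show ?case using A by (cases "i = j") auto
next
  case (Suc k)
  have col: "(\<Sum>m<n. norm (A $$ (m,j))) \<le> abs_sum A n"
  proof -
    have "(\<Sum>m<n. norm (A $$ (m,j))) \<le> (\<Sum>m<n. \<Sum>j'<n. norm (A $$ (m,j')))"
      using Suc.prems by (intro sum_mono member_le_sum) auto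
    then show ?thesis by (simp add: abs_sum_def)
  qed
  have "(A ^\<^sub>m Suc k) $$ (i,j) = (\<Sum>m<n. (A ^\<^sub>m k) $$ (i,m) * A $$ (m,j))"
  proof -
    have "(A ^\<^sub>m Suc k) $$ (i,j) = (A ^\<^sub>m k * A) $$ (i,j)" by simp
    also have "\<dots> = (\<Sum>m<n. (A ^\<^sub>m k) $$ (i,m) * A $$ (m,j))"
      by (rule mult_entry) (use A Suc.prems in auto)
    finally show ?thesis .
  qed
  then have "norm ((A ^\<^sub>m Suc k) $$ (i,j)) \<le> (\<Sum>m<n. norm ((A ^\<^sub>m k) $$ (i,m)) * norm (A $$ (m,j)))"
    by (simp add: norm_mult[symmetric] sum_norm_le)
  also have "\<dots> \<le> (\<Sum>m<n. abs_sum A n ^ k * norm (A $$ (m,j)))"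
    using Suc by (intro sum_mono mult_right_mono) auto
  also have "\<dots> = abs_sum A n ^ k * (\<Sum>m<n. norm (A $$ (m,j)))"
    by (simp add: sum_distrib_left)
  also have "\<dots> \<le> abs_sum A n ^ k * abs_sum A n"
    using col by (intro mult_left_mono) (auto simp: abs_sum_def intro!: zero_le_power sum_nonneg)
  finally show ?case by (simp add: mult.commute)
qed

lemma summable_entry:
  fixes A :: "complex mat" and z :: complex
  assumes A: "A \<in> carrier_mat n n" and i: "i < n" and j: "j < n"
  shows "summable (\<lambda>k. norm (z ^ k * (A ^\<^sub>m k) $$ (i,j) / fact k))"
proof (rule summable_comparison_test[OF _ summable_exp[of "norm z * abs_sum A n"]])
  show "\<exists>N. \<forall>k\<ge>N. norm (norm (z ^ k * (A ^\<^sub>m k) $$ (i,j) / fact k)) \<le> inverse (fact k) * (norm z * abs_sum A n) ^ k"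
  proof (intro exI allI impI)
    fix k :: nat
    have "norm (z ^ k * (A ^\<^sub>m k) $$ (i,j) / fact k) = norm z ^ k * norm ((A ^\<^sub>m k) $$ (i,j)) / fact k"
      by (simp add: norm_mult norm_divide norm_power)
    also have "\<dots> \<le> norm z ^ k * abs_sum A n ^ k / fact k"
      by (intro divide_right_mono mult_left_mono pow_bound[OF A i j]) auto
    finally show "norm (norm (z ^ k * (A ^\<^sub>m k) $$ (i,j) / fact k)) \<le> inverse (fact k) * (norm z * abs_sum A n) ^ k"
      by (simp add: power_mult_distrib field_simps)
  qed
qed

lemma mexp_smult_entry:
  fixes A :: "complex mat" and z :: complex
  assumes A: "A \<in> carrier_mat n n" and i: "i < n" and j: "j < n"
  shows "mexp (z \<cdot>\<^sub>m A) $$ (i,j) = (\<Sum>k. z ^ k * (A ^\<^sub>m k) $$ (i,j) / fact k)"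
  using A i j by (simp add: mexp_def smult_pow[OF A])

lemma mexp_carrier: "A \<in> carrier_mat n n \<Longrightarrow> mexp A \<in> carrier_mat n n"
  by (simp add: mexp_def)

lemma binom_coeff_sum:
  fixes a b :: complex
  shows "(\<Sum>p\<le>k. a ^ p * b ^ (k - p) / (fact p * fact (k - p))) = (a + b) ^ k / fact k"
proof -
  have "(a + b) ^ k = (\<Sum>p\<le>k. of_nat (k choose p) * a ^ p * b ^ (k - p))"
    by (rule binomial_ring)
  also have "\<dots> = (\<Sum>p\<le>k. fact k * (a ^ p * b ^ (k - p) / (fact p * fact (k - p))))"
    by (intro sum.cong refl) (simp add: binomial_fact)
  also have "\<dots> = fact k * (\<Sum>p\<le>k. a ^ p * b ^ (k - p) / (fact p * fact (k - p)))"
    by (simp add: sum_distrib_left)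
  finally show ?thesis by simp
qed

lemma mexp_add_smult:
  fixes A :: "complex mat" and a b :: complex
  assumes A: "A \<in> carrier_mat n n"
  shows "mexp (a \<cdot>\<^sub>m A) * mexp (b \<cdot>\<^sub>m A) = mexp ((a + b) \<cdot>\<^sub>m A)"
proof (rule eq_matI)
  have cA: "a \<cdot>\<^sub>m A \<in> carrier_mat n n" "b \<cdot>\<^sub>m A \<in> carrier_mat n n" "(a + b) \<cdot>\<^sub>m A \<in> carrier_mat n n"
    using A by auto
  note mc = mexp_carrier[OF cA(1)] mexp_carrier[OF cA(2)] mexp_carrier[OF cA(3)]
  show "dim_row (mexp (a \<cdot>\<^sub>m A) * mexp (b \<cdot>\<^sub>m A)) = dim_row (mexp ((a + b) \<cdot>\<^sub>m A))"
       "dim_col (mexp (a \<cdot>\<^sub>m A) * mexp (b \<cdot>\<^sub>m A)) = dim_col (mexp ((a + b) \<cdot>\<^sub>m A))"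
    using mc by auto
  fix i j assume "i < dim_row (mexp ((a + b) \<cdot>\<^sub>m A))" "j < dim_col (mexp ((a + b) \<cdot>\<^sub>m A))"
  then have i: "i < n" and j: "j < n" using mc by auto
  define f where "f = (\<lambda>z i j k. z ^ k * (A ^\<^sub>m k) $$ (i,j) / fact k)"
  have sf: "summable (\<lambda>k. norm (f z i j k))" if "i < n" "j < n" for z i j
    using summable_entry[OF A that] by (simp add: f_def)
  have lhs: "(mexp (a \<cdot>\<^sub>m A) * mexp (b \<cdot>\<^sub>m A)) $$ (i,j) = (\<Sum>m<n. suminf (f a i m) * suminf (f b m j))"
    using i j by (simp add: mult_entry[OF mc(1,2) i j] mexp_smult_entry[OF A] f_def)
  have "(\<lambda>k. \<Sum>m<n. \<Sum>p\<le>k. f a i m p * f b m j (k - p)) sums (\<Sum>m<n. suminf (f a i m) * suminf (f b m j))"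
    by (intro sums_sum Cauchy_product_sums sf) (use i j in auto)
  moreover have "(\<Sum>m<n. \<Sum>p\<le>k. f a i m p * f b m j (k - p)) = f (a + b) i j k" for k
  proof -
    have "(\<Sum>m<n. \<Sum>p\<le>k. f a i m p * f b m j (k - p))
        = (\<Sum>p\<le>k. (a ^ p * b ^ (k - p) / (fact p * fact (k - p))) * (\<Sum>m<n. (A ^\<^sub>m p) $$ (i,m) * (A ^\<^sub>m (k - p)) $$ (m,j)))"
    proof -
      have tm: "f a i m p * f b m j (k - p) = (a ^ p * b ^ (k - p) / (fact p * fact (k - p))) * ((A ^\<^sub>m p) $$ (i,m) * (A ^\<^sub>m (k - p)) $$ (m,j))" for m p
        unfolding f_def by (simp add: field_simps)
      show ?thesis unfolding tm by (subst sum.swap) (simp only: sum_distrib_left)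
    qed
    also have "\<dots> = (\<Sum>p\<le>k. (a ^ p * b ^ (k - p) / (fact p * fact (k - p))) * (A ^\<^sub>m k) $$ (i,j))"
    proof (intro sum.cong refl)
      fix p assume "p \<in> {..k}"
      then have "A ^\<^sub>m p * A ^\<^sub>m (k - p) = A ^\<^sub>m k" using pow_mat_add[OF A, of p "k - p"] by simp
      then have "(\<Sum>m<n. (A ^\<^sub>m p) $$ (i,m) * (A ^\<^sub>m (k - p)) $$ (m,j)) = (A ^\<^sub>m k) $$ (i,j)"
        using mult_entry[of "A ^\<^sub>m p" n n "A ^\<^sub>m (k - p)" n i j] A i j by simp
      then show "(a ^ p * b ^ (k - p) / (fact p * fact (k - p))) * (\<Sum>m<n. (A ^\<^sub>m p) $$ (i,m) * (A ^\<^sub>m (k - p)) $$ (m,j))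
          = (a ^ p * b ^ (k - p) / (fact p * fact (k - p))) * (A ^\<^sub>m k) $$ (i,j)" by simp
    qed
    also have "\<dots> = (a + b) ^ k / fact k * (A ^\<^sub>m k) $$ (i,j)"
      by (subst sum_distrib_right[symmetric]) (simp only: binom_coeff_sum)
    finally show ?thesis by (simp add: f_def)
  qed
  ultimately have "f (a + b) i j sums (\<Sum>m<n. suminf (f a i m) * suminf (f b m j))" by simp
  then have s1: "suminf (f (a + b) i j) = (\<Sum>m<n. suminf (f a i m) * suminf (f b m j))"
    by (rule sums_unique[symmetric])
  have "mexp ((a + b) \<cdot>\<^sub>m A) $$ (i,j) = suminf (f (a + b) i j)"
    unfolding f_def by (rule mexp_smult_entry[OF A i j])
  then show "(mexp (a \<cdot>\<^sub>m A) * mexp (b \<cdot>\<^sub>m A)) $$ (i,j) = mexp ((a + b) \<cdot>\<^sub>m A) $$ (i,j)"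
    using lhs s1 by simp
qed

lemma mexp_zero:
  fixes A :: "complex mat"
  assumes A: "A \<in> carrier_mat n n"
  shows "mexp (0 \<cdot>\<^sub>m A) = 1\<^sub>m n"
proof (rule eq_matI)
  fix i j assume "i < dim_row (1\<^sub>m n)" "j < dim_col (1\<^sub>m n)"
  then have i: "i < n" and j: "j < n" by auto
  have "(\<lambda>k. (0::complex) ^ k * (A ^\<^sub>m k) $$ (i,j) / fact k) = (\<lambda>k. if k = 0 then (if i = j then 1 else 0) else 0)"
  proof
    fix k show "(0::complex) ^ k * (A ^\<^sub>m k) $$ (i,j) / fact k = (if k = 0 then (if i = j then 1 else 0) else 0)"
      by (cases k) (use A i j in auto)
  qed
  moreover have "(\<lambda>k. if k = 0 then (if i = j then 1 else 0) else 0) sums (if i = j then 1 else 0 :: complex)"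
    using sums_single[of 0 "\<lambda>_. if i = j then 1 else 0 :: complex"] by simp
  ultimately have "(\<lambda>k. (0::complex) ^ k * (A ^\<^sub>m k) $$ (i,j) / fact k) sums (if i = j then 1 else 0 :: complex)"
    by simp
  then have "(\<Sum>k. (0::complex) ^ k * (A ^\<^sub>m k) $$ (i,j) / fact k) = (if i = j then 1 else 0)"
    by (rule sums_unique[symmetric])
  moreover have "mexp (0 \<cdot>\<^sub>m A) $$ (i,j) = (\<Sum>k. (0::complex) ^ k * (A ^\<^sub>m k) $$ (i,j) / fact k)"
    by (rule mexp_smult_entry[OF A i j])
  ultimately show "mexp (0 \<cdot>\<^sub>m A) $$ (i,j) = 1\<^sub>m n $$ (i,j)"
    using i j by simp
qed (use A in \<open>auto simp: mexp_def\<close>)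

lemma herm_pow_entry:
  assumes H: "H \<in> carrier_mat n n" and h: "hermitian H" and i: "i < n" and j: "j < n"
  shows "cnj ((H ^\<^sub>m k) $$ (j,i)) = (H ^\<^sub>m k) $$ (i,j)"
  using i j
proof (induction k arbitrary: i j)
  case 0 then show ?case using H by auto
next
  case (Suc k)
  have hc: "cnj (H $$ (m,i)) = H $$ (i,m)" if "m < n" for m
  proof -
    have "cadj H $$ (i,m) = H $$ (i,m)" using h by (simp add: hermitian_def)
    then show ?thesis using H Suc.prems that by (simp add: cadj_def)
  qed
  have "(H ^\<^sub>m Suc k) $$ (j,i) = (H ^\<^sub>m k * H) $$ (j,i)" by simp
  also have "\<dots> = (\<Sum>m<n. (H ^\<^sub>m k) $$ (j,m) * H $$ (m,i))"
    by (rule mult_entry) (use H Suc.prems in auto)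
  finally have "cnj ((H ^\<^sub>m Suc k) $$ (j,i)) = (\<Sum>m<n. H $$ (i,m) * (H ^\<^sub>m k) $$ (m,j))"
    using Suc.IH Suc.prems hc by (simp add: mult.commute)
  also have "\<dots> = (H * H ^\<^sub>m k) $$ (i,j)"
    by (rule mult_entry[symmetric]) (use H Suc.prems in auto)
  also have "H * H ^\<^sub>m k = H ^\<^sub>m Suc k"
    using pow_mat_add[OF H, of 1 k] H by simp
  finally show ?case .
qed

lemma cadj_mexp:
  fixes z :: complex
  assumes H: "H \<in> carrier_mat n n" and h: "hermitian H"
  shows "cadj (mexp (z \<cdot>\<^sub>m H)) = mexp (cnj z \<cdot>\<^sub>m H)"
proof (rule eq_matI)
  fix i j assume "i < dim_row (mexp (cnj z \<cdot>\<^sub>m H))" "j < dim_col (mexp (cnj z \<cdot>\<^sub>m H))"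
  then have i: "i < n" and j: "j < n" using H mexp_carrier[of "cnj z \<cdot>\<^sub>m H" n] by auto
  have "cadj (mexp (z \<cdot>\<^sub>m H)) $$ (i,j) = cnj (\<Sum>k. z ^ k * (H ^\<^sub>m k) $$ (j,i) / fact k)"
  proof -
    have mc: "mexp (z \<cdot>\<^sub>m H) \<in> carrier_mat n n" by (rule mexp_carrier) (use H in auto)
    show ?thesis using mc i j by (simp add: cadj_def mexp_smult_entry[OF H])
  qed
  also have "\<dots> = (\<Sum>k. cnj (z ^ k * (H ^\<^sub>m k) $$ (j,i) / fact k))"
  proof -
    have "summable (\<lambda>k. z ^ k * (H ^\<^sub>m k) $$ (j,i) / fact k)"
      by (rule summable_norm_cancel[OF summable_entry[OF H j i]])
    then have "(\<lambda>k. z ^ k * (H ^\<^sub>m k) $$ (j,i) / fact k) sums (\<Sum>k. z ^ k * (H ^\<^sub>m k) $$ (j,i) / fact k)"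
      by (rule summable_sums)
    then have "(\<lambda>k. cnj (z ^ k * (H ^\<^sub>m k) $$ (j,i) / fact k)) sums cnj (\<Sum>k. z ^ k * (H ^\<^sub>m k) $$ (j,i) / fact k)"
      by (simp only: sums_cnj)
    then show ?thesis by (rule sums_unique)
  qed
  also have "\<dots> = (\<Sum>k. cnj z ^ k * (H ^\<^sub>m k) $$ (i,j) / fact k)"
  proof -
    have "\<And>k. cnj (z ^ k * (H ^\<^sub>m k) $$ (j,i) / fact k) = cnj z ^ k * (H ^\<^sub>m k) $$ (i,j) / fact k"
    proof -
      fix k
      have f: "cnj (fact k :: complex) = fact k" by (metis complex_cnj_of_nat of_nat_fact)
      show "cnj (z ^ k * (H ^\<^sub>m k) $$ (j,i) / fact k) = cnj z ^ k * (H ^\<^sub>m k) $$ (i,j) / fact k"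
        by (simp only: complex_cnj_divide complex_cnj_mult complex_cnj_power f herm_pow_entry[OF H h i j])
    qed
    then show ?thesis by (simp only:)
  qed
  also have "\<dots> = mexp (cnj z \<cdot>\<^sub>m H) $$ (i,j)"
    using i j by (simp add: mexp_smult_entry[OF H])
  finally show "cadj (mexp (z \<cdot>\<^sub>m H)) $$ (i,j) = mexp (cnj z \<cdot>\<^sub>m H) $$ (i,j)" .
qed (use H mexp_carrier[of "cnj z \<cdot>\<^sub>m H" n] mexp_carrier[of "z \<cdot>\<^sub>m H" n] in \<open>auto simp: cadj_def\<close>)

definition vecm :: "nat \<Rightarrow> complex mat \<Rightarrow> complex vec" where
  "vecm D M = vec (D * D) (\<lambda>k. M $$ (k div D, k mod D))"

lemma divmod_lt:
  fixes k D :: nat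
  shows "k < D * D \<Longrightarrow> k div D < D" "k < D * D \<Longrightarrow> k mod D < D"
proof -
  assume k: "k < D * D"
  then have "D > 0" by (cases D) auto
  then show "k div D < D" "k mod D < D" using k by (auto simp: less_mult_imp_div_less)
qed

lemma sum_pairs:
  fixes f :: "nat \<Rightarrow> nat \<Rightarrow> 'a::comm_monoid_add"
  shows "(\<Sum>l<D * D. f (l div D) (l mod D)) = (\<Sum>x<D. \<Sum>e<D. f x e)"
proof -
  have "(\<Sum>l<D * D. f (l div D) (l mod D)) = (\<Sum>x<D. \<Sum>e<D. f ((e + D * x) div D) ((e + D * x) mod D))"
    by (rule sum_split_high)
  also have "\<dots> = (\<Sum>x<D. \<Sum>e<D. f x e)"
    by (intro sum.cong refl) auto
  finally show ?thesis .
qed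

lemma if01_mult[simp]:
  "x * (if P then 1 else 0) = (if P then x else (0::'a::semiring_1))"
  "(if P then 1 else 0) * x = (if P then x else (0::'a::semiring_1))"
  by auto

lemma if0_mult[simp]:
  "(if P then a else 0) * b = (if P then a * b else (0::'a::semiring_0))"
  "b * (if P then a else 0) = (if P then b * a else (0::'a::semiring_0))"
  by auto

lemma cnj_if: "cnj (if P then a else b) = (if P then cnj a else cnj b)"
  by auto

lemma phi_plus_vecm: "phi_plus D = vecm D (1\<^sub>m D)"
  unfolding phi_plus_def vecm_def by (intro eq_vecI) (auto simp: divmod_lt)

lemma dim_kron[simp]: "dim_row (kron A B) = dim_row A * dim_row B" "dim_col (kron A B) = dim_col A * dim_col B"
  by (auto simp: kron_def)

lemma kron_vecm:
  assumes A: "A \<in> carrier_mat D D" and M: "M \<in> carrier_mat D D"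
  shows "kron A (1\<^sub>m D) *\<^sub>v vecm D M = vecm D (A * M)"
proof (rule eq_vecI)
  show "dim_vec (kron A (1\<^sub>m D) *\<^sub>v vecm D M) = dim_vec (vecm D (A * M))"
    using A by (simp add: vecm_def)
  fix k assume "k < dim_vec (vecm D (A * M))"
  then have k: "k < D * D" by (simp add: vecm_def)
  have "(kron A (1\<^sub>m D) *\<^sub>v vecm D M) $ k
      = (\<Sum>l<D * D. A $$ (k div D, l div D) * (if k mod D = l mod D then 1 else 0) * M $$ (l div D, l mod D))"
    using A k by (simp add: scalar_prod_def kron_def vecm_def lessThan_atLeast0 divmod_lt)
  also have "\<dots> = (\<Sum>x<D. \<Sum>e<D. A $$ (k div D, x) * (if k mod D = e then 1 else 0) * M $$ (x, e))"
    by (rule sum_pairs[where f="\<lambda>x e. A $$ (k div D, x) * (if k mod D = e then 1 else 0) * M $$ (x, e)"])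
  also have "\<dots> = (\<Sum>x<D. A $$ (k div D, x) * M $$ (x, k mod D))"
    using k by (intro sum.cong refl) (simp add: sum.delta sum.delta' divmod_lt)
  also have "\<dots> = (A * M) $$ (k div D, k mod D)"
    using k by (intro mult_entry[symmetric, OF A M]) (auto simp: divmod_lt)
  also have "\<dots> = vecm D (A * M) $ k" using k by (simp add: vecm_def)
  finally show "(kron A (1\<^sub>m D) *\<^sub>v vecm D M) $ k = vecm D (A * M) $ k" .
qed

lemma braket_vecm:
  assumes U: "U \<in> carrier_mat D D" and M: "M \<in> carrier_mat D D"
  shows "braket (cadj (kron U (1\<^sub>m D)) *\<^sub>v phi_plus D) (vecm D M) = ctrace (U * M)"
proof -
  have ent: "cnj ((cadj (kron U (1\<^sub>m D)) *\<^sub>v phi_plus D) $ k) = U $$ (k mod D, k div D)" if k: "k < D * D" for k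
  proof -
    have "(cadj (kron U (1\<^sub>m D)) *\<^sub>v phi_plus D) $ k
        = (\<Sum>l<D * D. cnj (U $$ (l div D, k div D) * (if l mod D = k mod D then 1 else 0)) * (if l div D = l mod D then 1 else 0))"
      using U k by (simp add: scalar_prod_def kron_def cadj_def phi_plus_def lessThan_atLeast0 divmod_lt)
    also have "\<dots> = (\<Sum>x<D. \<Sum>e<D. cnj (U $$ (x, k div D) * (if e = k mod D then 1 else 0)) * (if x = e then 1 else 0))"
      by (rule sum_pairs[where f="\<lambda>x e. cnj (U $$ (x, k div D) * (if e = k mod D then 1 else 0)) * (if x = e then 1 else 0)"])
    also have "\<dots> = (\<Sum>x<D. if x = k mod D then cnj (U $$ (x, k div D)) else 0)"
      by (intro sum.cong refl) (simp add: cnj_if sum.delta)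
    also have "\<dots> = cnj (U $$ (k mod D, k div D))"
      using k by (simp add: sum.delta divmod_lt)
    finally show ?thesis by simp
  qed
  define w where "w = cadj (kron U (1\<^sub>m D)) *\<^sub>v phi_plus D"
  have dw: "dim_vec w = D * D" using U by (simp add: w_def cadj_def)
  have "braket (cadj (kron U (1\<^sub>m D)) *\<^sub>v phi_plus D) (vecm D M)
      = (\<Sum>k<D * D. cnj (w $ k) * M $$ (k div D, k mod D))"
    unfolding braket_def w_def[symmetric] using dw
    by (simp add: scalar_prod_def vecm_def lessThan_atLeast0)
  also have "\<dots> = (\<Sum>k<D * D. U $$ (k mod D, k div D) * M $$ (k div D, k mod D))"
    by (intro sum.cong refl) (simp add: ent w_def)
  also have "\<dots> = (\<Sum>x<D. \<Sum>e<D. U $$ (e, x) * M $$ (x, e))"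
    by (rule sum_pairs[where f="\<lambda>x e. U $$ (e, x) * M $$ (x, e)"])
  also have "\<dots> = (\<Sum>e<D. (U * M) $$ (e, e))"
    by (subst sum.swap) (intro sum.cong refl, simp add: mult_entry[OF U M])
  also have "\<dots> = ctrace (U * M)" using U by (simp add: ctrace_def)
  finally show ?thesis .
qed

lemma ctrace_ket_bra:
  assumes X: "X \<in> carrier_mat m m" and u: "dim_vec u = m" and w: "dim_vec w = m"
  shows "ctrace ((c \<cdot>\<^sub>m ket_bra u w) * X) = c * braket w (X *\<^sub>v u)"
proof -
  have "ctrace ((c \<cdot>\<^sub>m ket_bra u w) * X) = (\<Sum>i<m. \<Sum>j<m. c * (u $ i * cnj (w $ j)) * X $$ (j, i))"
    using X u w by (simp add: ctrace_def scalar_prod_def ket_bra_def lessThan_atLeast0)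
  also have "\<dots> = c * (\<Sum>j<m. cnj (w $ j) * (\<Sum>i<m. X $$ (j, i) * u $ i))"
    by (subst sum.swap) (simp add: sum_distrib_left mult_ac)
  also have "\<dots> = c * braket w (X *\<^sub>v u)"
    using X u w by (simp add: braket_def scalar_prod_def lessThan_atLeast0)
  finally show ?thesis .
qed

lemma cadj_carrier: "A \<in> carrier_mat n m \<Longrightarrow> cadj A \<in> carrier_mat m n"
  by (auto simp: cadj_def)

lemma tensor_ops_dim[simp]: "dim_row (tensor_ops d N F) = d ^ N" "dim_col (tensor_ops d N F) = d ^ N"
  by (auto simp: tensor_ops_def)

lemma cadj_tensor:
  assumes d: "d \<ge> 1" and F: "\<And>t. t < N \<Longrightarrow> F t \<in> carrier_mat d d"
  shows "cadj (tensor_ops d N F) = tensor_ops d N (\<lambda>t. cadj (F t))"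
proof (rule eq_matI)
  fix x y assume "x < dim_row (tensor_ops d N (\<lambda>t. cadj (F t)))" "y < dim_col (tensor_ops d N (\<lambda>t. cadj (F t)))"
  then have x: "x < d ^ N" and y: "y < d ^ N" by (auto simp: tensor_ops_def)
  have "cadj (tensor_ops d N F) $$ (x,y) = cnj (\<Prod>t<N. F t $$ (digit d y t, digit d x t))"
    using x y by (simp add: cadj_def tensor_ops_entry)
  also have "\<dots> = (\<Prod>t<N. cadj (F t) $$ (digit d x t, digit d y t))"
  proof -
    have Fd: "\<And>t. t < N \<Longrightarrow> dim_row (F t) = d \<and> dim_col (F t) = d" using F by auto
    show ?thesis using Fd d by (auto intro!: prod.cong simp: cadj_def digit_lt)
  qed
  also have "\<dots> = tensor_ops d N (\<lambda>t. cadj (F t)) $$ (x,y)" using x y by (simp add: tensor_ops_entry)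
  finally show "cadj (tensor_ops d N F) $$ (x,y) = tensor_ops d N (\<lambda>t. cadj (F t)) $$ (x,y)" .
qed (auto simp: cadj_def tensor_ops_def)

definition Wt :: "real \<Rightarrow> complex mat \<Rightarrow> nat \<Rightarrow> complex mat" where
  "Wt \<epsilon> H t = mexp ((\<i> * of_real (\<epsilon> * real t)) \<cdot>\<^sub>m H)"

lemma Wt_carrier: "H \<in> carrier_mat d d \<Longrightarrow> Wt \<epsilon> H t \<in> carrier_mat d d"
  unfolding Wt_def by (rule mexp_carrier) auto

lemma Vop_tensor:
  assumes d: "d \<ge> 1" and H: "H \<in> carrier_mat d d"
  shows "Vop d N \<epsilon> H = tensor_ops d N (Wt \<epsilon> H)"
proof -
  have "Vop d N \<epsilon> H = tensor_ops d N (\<lambda>s. if s \<in> set [0..<N] then Wt \<epsilon> H s else 1\<^sub>m d)"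
    unfolding Vop_def Wt_def[symmetric] by (rule foldr_on_slice[OF d Wt_carrier[OF H]]) simp
  also have "\<dots> = tensor_ops d N (Wt \<epsilon> H)" by (rule tensor_ops_cong) simp
  finally show ?thesis .
qed

lemma Wt_adj:
  assumes H: "H \<in> carrier_mat d d" and h: "hermitian H"
  shows "cadj (Wt \<epsilon> H t) = mexp ((- \<i> * of_real (\<epsilon> * real t)) \<cdot>\<^sub>m H)"
  unfolding Wt_def cadj_mexp[OF H h] by simp

lemma Wt_unitary:
  assumes H: "H \<in> carrier_mat d d" and h: "hermitian H"
  shows "Wt \<epsilon> H t * cadj (Wt \<epsilon> H t) = 1\<^sub>m d"
proof -
  have "Wt \<epsilon> H t * cadj (Wt \<epsilon> H t) = mexp ((\<i> * of_real (\<epsilon> * real t) + (- \<i> * of_real (\<epsilon> * real t))) \<cdot>\<^sub>m H)"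
    unfolding Wt_adj[OF H h] unfolding Wt_def by (rule mexp_add_smult[OF H])
  also have "\<dots> = 1\<^sub>m d" using mexp_zero[OF H] by simp
  finally show ?thesis .
qed

lemma Wt_0: "H \<in> carrier_mat d d \<Longrightarrow> Wt \<epsilon> H 0 = 1\<^sub>m d"
  unfolding Wt_def using mexp_zero[of H d] by simp

lemma heis_carrier:
  "H \<in> carrier_mat d d \<Longrightarrow> A \<in> carrier_mat d d \<Longrightarrow> heis H s A \<in> carrier_mat d d"
proof -
  assume H: "H \<in> carrier_mat d d" and A: "A \<in> carrier_mat d d"
  have "mexp (x \<cdot>\<^sub>m H) \<in> carrier_mat d d" for x by (rule mexp_carrier) (use H in simp)
  then show ?thesis unfolding heis_def using A by (meson mult_carrier_mat)
qed

lemma heis_Wt: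
  assumes H: "H \<in> carrier_mat d d" and h: "hermitian H"
  shows "heis H (\<epsilon> * real t) A = Wt \<epsilon> H t * A * cadj (Wt \<epsilon> H t)"
  unfolding heis_def Wt_adj[OF H h] unfolding Wt_def ..

lemma foldr_right:
  fixes B :: "nat \<Rightarrow> complex mat"
  assumes B: "\<And>t. t < Suc n \<Longrightarrow> B t \<in> carrier_mat d d" and r: "r \<in> carrier_mat d d"
  shows "foldr (\<lambda>t M. (if t = 0 then B 0 * r else B t) * M) (rev [0..<Suc n]) (1\<^sub>m d)
       = foldr (\<lambda>t M. B t * M) (rev [0..<Suc n]) (1\<^sub>m d) * r"
  using B
proof (induction n)
  case 0
  have "B 0 \<in> carrier_mat d d" using 0 by auto
  then show ?case using r by simp
next
  case (Suc n)
  have F: "foldr (\<lambda>t M. B t * M) (rev [0..<Suc n]) (1\<^sub>m d) \<in> carrier_mat d d"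
    using Suc.prems by (intro foldr_carrier) auto
  have IH: "foldr (\<lambda>t M. (if t = 0 then B 0 * r else B t) * M) (rev [0..<Suc n]) (1\<^sub>m d)
       = foldr (\<lambda>t M. B t * M) (rev [0..<Suc n]) (1\<^sub>m d) * r"
    by (rule Suc.IH) (use Suc.prems in auto)
  have Bn: "B (Suc n) \<in> carrier_mat d d" using Suc.prems by auto
  have "foldr (\<lambda>t M. (if t = 0 then B 0 * r else B t) * M) (rev [0..<Suc (Suc n)]) (1\<^sub>m d)
      = B (Suc n) * foldr (\<lambda>t M. (if t = 0 then B 0 * r else B t) * M) (rev [0..<Suc n]) (1\<^sub>m d)"
    by simp
  also have "\<dots> = B (Suc n) * (foldr (\<lambda>t M. B t * M) (rev [0..<Suc n]) (1\<^sub>m d) * r)"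
    by (simp only: IH)
  also have "\<dots> = (B (Suc n) * foldr (\<lambda>t M. B t * M) (rev [0..<Suc n]) (1\<^sub>m d)) * r"
    by (rule assoc_mult_mat[symmetric, OF Bn F r])
  also have "B (Suc n) * foldr (\<lambda>t M. B t * M) (rev [0..<Suc n]) (1\<^sub>m d)
      = foldr (\<lambda>t M. B t * M) (rev [0..<Suc (Suc n)]) (1\<^sub>m d)"
    by simp
  finally show ?case .
qed

lemma cadj_one: "cadj (1\<^sub>m n) = 1\<^sub>m n"
  by (intro eq_matI) (auto simp: cadj_def)

lemma cshift_carrier: "cshift d N \<in> carrier_mat (d ^ N) (d ^ N)"
  by (simp add: cshift_def)

lemma main_trace:
  assumes d: "d \<ge> 1" and N: "N \<ge> 1" and H: "H \<in> carrier_mat d d" and h: "hermitian H"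
    and P: "P \<in> carrier_mat (d ^ N) (d ^ N)" and C: "mexp ((\<i> * of_real \<epsilon>) \<cdot>\<^sub>m P) = cshift d N"
    and r: "\<rho> \<in> carrier_mat d d" and O: "\<forall>t<N. Ops t \<in> carrier_mat d d"
  shows "ctrace (half_Stilde d N \<epsilon> H P * (tensor_ops d N Ops * (on_slice d N 0 \<rho> * half_Stilde d N \<epsilon> H P)))
       = ctrace (\<rho> * time_ordered d N \<epsilon> H Ops)"
proof -
  define D where "D = d ^ N"
  define V where "V = Vop d N \<epsilon> H"
  define S where "S = mexp ((\<i> * of_real (\<epsilon> / 2)) \<cdot>\<^sub>m P)"
  define Y where "Y = tensor_ops d N Ops"
  define R0 where "R0 = on_slice d N 0 \<rho>"
  define Cs where "Cs = cshift d N"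
  define W where "W = Wt \<epsilon> H"
  have Wc: "\<And>t. W t \<in> carrier_mat d d" unfolding W_def by (rule Wt_carrier[OF H])
  have cWc: "\<And>t. cadj (W t) \<in> carrier_mat d d" by (rule cadj_carrier[OF Wc])
  have V: "V = tensor_ops d N W" using Vop_tensor[OF d H] by (simp add: V_def W_def)
  have Vc: "V \<in> carrier_mat D D" by (simp add: V D_def)
  have cV: "cadj V = tensor_ops d N (\<lambda>t. cadj (W t))" unfolding V by (rule cadj_tensor[OF d Wc])
  have cVc: "cadj V \<in> carrier_mat D D" by (simp add: cV D_def)
  have Sc: "S \<in> carrier_mat D D" unfolding S_def D_def by (rule mexp_carrier) (use P in simp)
  have Yc: "Y \<in> carrier_mat D D" by (simp add: Y_def D_def)
  have R0c: "R0 \<in> carrier_mat D D" by (simp add: R0_def D_def)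
  have Cc: "Cs \<in> carrier_mat D D" by (simp add: Cs_def D_def cshift_carrier)
  have VV: "V * cadj V = 1\<^sub>m D"
  proof -
    have "V * cadj V = tensor_ops d N (\<lambda>t. W t * cadj (W t))"
      unfolding cV unfolding V by (rule tensor_ops_mult[OF d Wc cWc])
    also have "\<dots> = tensor_ops d N (\<lambda>_. 1\<^sub>m d)"
      by (rule tensor_ops_cong) (simp add: W_def Wt_unitary[OF H h])
    finally show ?thesis using tensor_ops_one[OF d] by (simp add: D_def)
  qed
  have SS: "S * S = Cs"
  proof -
    have e: "\<i> * complex_of_real (\<epsilon> / 2) + \<i> * complex_of_real (\<epsilon> / 2) = \<i> * complex_of_real \<epsilon>"
      by (simp add: field_simps)
    show ?thesis unfolding S_def mexp_add_smult[OF P] e C Cs_def ..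
  qed
  have VVX: "V * (cadj V * X) = X" if "X \<in> carrier_mat D D" for X
    using that Vc cVc VV by (simp add: assoc_mult_mat[symmetric, of V D D "cadj V" D X D])
  have SSX: "S * (S * X) = Cs * X" if "X \<in> carrier_mat D D" for X
    using that Sc SS by (simp add: assoc_mult_mat[symmetric, of S D D S D X D])
  define U where "U = half_Stilde d N \<epsilon> H P"
  have U: "U = cadj V * (S * V)"
    unfolding U_def half_Stilde_def V_def[symmetric] S_def[symmetric]
    using cVc Sc Vc by simp
  have Uc: "U \<in> carrier_mat D D" using U cVc Sc Vc by simp
  have UU: "U * U = cadj V * (Cs * V)"
  proof -
    have SV: "S * V \<in> carrier_mat D D" using Sc Vc by simp
    have cSV: "cadj V * (S * V) \<in> carrier_mat D D" using cVc SV by simp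
    have "U * U = cadj V * ((S * V) * (cadj V * (S * V)))"
      unfolding U by (rule assoc_mult_mat[OF cVc SV cSV])
    also have "(S * V) * (cadj V * (S * V)) = S * (V * (cadj V * (S * V)))"
      by (rule assoc_mult_mat[OF Sc Vc cSV])
    also have "V * (cadj V * (S * V)) = S * V" by (rule VVX[OF SV])
    also have "S * (S * V) = Cs * V" by (rule SSX[OF Vc])
    finally show ?thesis .
  qed
  have e2: "(Y * (R0 * U)) * U = (Y * (R0 * (cadj V * Cs))) * V"
  proof -
    have R0U: "R0 * U \<in> carrier_mat D D" using R0c Uc by simp
    have cVCs: "cadj V * Cs \<in> carrier_mat D D" using cVc Cc by simp
    have R0cVCs: "R0 * (cadj V * Cs) \<in> carrier_mat D D" using R0c cVCs by simp
    have "(Y * (R0 * U)) * U = Y * ((R0 * U) * U)" by (rule assoc_mult_mat[OF Yc R0U Uc])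
    also have "\<dots> = Y * (R0 * (U * U))" by (simp only: assoc_mult_mat[OF R0c Uc Uc])
    also have "\<dots> = Y * (R0 * ((cadj V * Cs) * V))" by (simp only: UU assoc_mult_mat[OF cVc Cc Vc])
    also have "\<dots> = Y * ((R0 * (cadj V * Cs)) * V)" by (simp only: assoc_mult_mat[OF R0c cVCs Vc])
    also have "\<dots> = (Y * (R0 * (cadj V * Cs))) * V" by (simp only: assoc_mult_mat[OF Yc R0cVCs Vc])
    finally show ?thesis .
  qed
  have e4: "V * (Y * (R0 * (cadj V * Cs))) = (V * (Y * (R0 * cadj V))) * Cs"
  proof -
    have R0cV: "R0 * cadj V \<in> carrier_mat D D" using R0c cVc by simp
    have YR0cV: "Y * (R0 * cadj V) \<in> carrier_mat D D" using Yc R0cV by simp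
    have "(V * (Y * (R0 * cadj V))) * Cs = V * ((Y * (R0 * cadj V)) * Cs)" by (rule assoc_mult_mat[OF Vc YR0cV Cc])
    also have "\<dots> = V * (Y * ((R0 * cadj V) * Cs))" by (simp only: assoc_mult_mat[OF Yc R0cV Cc])
    also have "\<dots> = V * (Y * (R0 * (cadj V * Cs)))" by (simp only: assoc_mult_mat[OF R0c cVc Cc])
    finally show ?thesis by simp
  qed
  have "ctrace (U * (Y * (R0 * U))) = ctrace ((Y * (R0 * U)) * U)"
    using Uc Yc R0c by (intro ctrace_comm) auto
  also have "\<dots> = ctrace ((Y * (R0 * (cadj V * Cs))) * V)" by (simp only: e2)
  also have "\<dots> = ctrace (V * (Y * (R0 * (cadj V * Cs))))"
    using Yc R0c cVc Cc Vc by (intro ctrace_comm) auto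
  also have "\<dots> = ctrace ((V * (Y * (R0 * cadj V))) * Cs)" by (simp only: e4)
  also have "\<dots> = ctrace (Cs * (V * (Y * (R0 * cadj V))))"
    using Yc R0c cVc Cc Vc by (intro ctrace_comm) auto
  finally have T1: "ctrace (U * (Y * (R0 * U))) = ctrace (Cs * (V * (Y * (R0 * cadj V))))" .
  define Rt where "Rt (t::nat) = (if t = 0 then \<rho> else 1\<^sub>m d)" for t
  define A where "A (t::nat) = W t * (Ops t * (Rt t * cadj (W t)))" for t
  have Rtc: "Rt t \<in> carrier_mat d d" for t using r by (simp add: Rt_def)
  have Ac: "A t \<in> carrier_mat d d" if "t < N" for t
    using that O Wc cWc Rtc unfolding A_def by (meson mult_carrier_mat)
  have R0t: "R0 = tensor_ops d N Rt" unfolding R0_def on_slice_def Rt_def by simp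
  have RcW: "Rt t * cadj (W t) \<in> carrier_mat d d" for t using Rtc cWc by (meson mult_carrier_mat)
  have ORcW: "Ops t * (Rt t * cadj (W t)) \<in> carrier_mat d d" if "t < N" for t
    using that O RcW by (meson mult_carrier_mat)
  have M: "V * (Y * (R0 * cadj V)) = tensor_ops d N A"
  proof -
    have "R0 * cadj V = tensor_ops d N (\<lambda>t. Rt t * cadj (W t))"
      unfolding R0t cV by (rule tensor_ops_mult[OF d Rtc cWc])
    moreover have "Y * tensor_ops d N (\<lambda>t. Rt t * cadj (W t)) = tensor_ops d N (\<lambda>t. Ops t * (Rt t * cadj (W t)))"
      unfolding Y_def using O RcW by (intro tensor_ops_mult[OF d]) auto
    moreover have "V * tensor_ops d N (\<lambda>t. Ops t * (Rt t * cadj (W t))) = tensor_ops d N A"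
      unfolding V A_def using ORcW Wc by (intro tensor_ops_mult[OF d]) auto
    ultimately show ?thesis by simp
  qed
  obtain n where n: "N = Suc n" using N by (cases N) auto
  have T2: "ctrace (Cs * tensor_ops d N A) = ctrace (foldr (\<lambda>t M. A t * M) (rev [0..<N]) (1\<^sub>m d))"
  proof -
    have T2a: "ctrace (Cs * tensor_ops d N A) = (\<Sum>z<d ^ N. \<Prod>t<N. A t $$ (digit d z t, digit d z ((t + N - 1) mod N)))"
      unfolding Cs_def by (rule ctrace_cshift[OF d Ac])
    have T2b: "(\<Sum>z<d ^ Suc n. \<Prod>t<Suc n. A t $$ (digit d z t, digit d z ((t + Suc n - 1) mod Suc n)))
        = ctrace (foldr (\<lambda>t M. A t * M) (rev [0..<Suc n]) (1\<^sub>m d))"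
      by (rule trace_chain[OF d]) (use Ac n in auto)
    show ?thesis using T2a T2b n by simp
  qed
  define Bh where "Bh (t::nat) = heis H (\<epsilon> * real t) (Ops t)" for t
  have Bhc: "Bh t \<in> carrier_mat d d" if "t < N" for t
    unfolding Bh_def using that O H by (intro heis_carrier) auto
  have AB: "A t = (if t = 0 then Bh 0 * \<rho> else Bh t)" if "t < N" for t
  proof (cases "t = 0")
    case True
    have W0: "W 0 = 1\<^sub>m d" unfolding W_def by (rule Wt_0[OF H])
    have O0: "Ops 0 \<in> carrier_mat d d" using O N by auto
    have "A 0 = Ops 0 * \<rho>" using W0 O0 r
      by (simp add: A_def Rt_def cadj_one carrier_matD)
    moreover have "Bh 0 = Ops 0" using W0 O0 unfolding Bh_def heis_Wt[OF H h] W_def[symmetric]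
      by (simp add: cadj_one carrier_matD)
    ultimately show ?thesis using True by simp
  next
    case False
    have Ot: "Ops t \<in> carrier_mat d d" using O that by auto
    have "A t = W t * (Ops t * cadj (W t))" using False cWc[of t] by (simp add: A_def Rt_def left_mult_one_mat)
    also have "\<dots> = Bh t" unfolding Bh_def heis_Wt[OF H h] W_def[symmetric]
      by (rule assoc_mult_mat[OF Wc Ot cWc, symmetric])
    finally show ?thesis using False by simp
  qed
  have "foldr (\<lambda>t M. A t * M) (rev [0..<N]) (1\<^sub>m d)
      = foldr (\<lambda>t M. (if t = 0 then Bh 0 * \<rho> else Bh t) * M) (rev [0..<N]) (1\<^sub>m d)"
    by (rule foldr_cong) (use AB in auto)
  also have "\<dots> = foldr (\<lambda>t M. Bh t * M) (rev [0..<N]) (1\<^sub>m d) * \<rho>"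
    unfolding n by (rule foldr_right) (use Bhc r n in auto)
  also have "foldr (\<lambda>t M. Bh t * M) (rev [0..<N]) (1\<^sub>m d) = time_ordered d N \<epsilon> H Ops"
    by (simp add: time_ordered_def Bh_def)
  finally have T3: "foldr (\<lambda>t M. A t * M) (rev [0..<N]) (1\<^sub>m d) = time_ordered d N \<epsilon> H Ops * \<rho>" .
  have TOc: "time_ordered d N \<epsilon> H Ops \<in> carrier_mat d d"
    unfolding time_ordered_def using Bhc by (intro foldr_carrier) (auto simp: Bh_def)
  show ?thesis
    unfolding U_def[symmetric] Y_def[symmetric] R0_def[symmetric]
    using T1 M T2 T3 ctrace_comm[OF TOc r] by simp
qed

lemma half_Stilde_carrier:
  assumes d: "d \<ge> 1" and H: "H \<in> carrier_mat d d" and P: "P \<in> carrier_mat (d ^ N) (d ^ N)"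
  shows "half_Stilde d N \<epsilon> H P \<in> carrier_mat (d ^ N) (d ^ N)"
proof -
  have V: "Vop d N \<epsilon> H \<in> carrier_mat (d ^ N) (d ^ N)" using Vop_tensor[OF d H] by simp
  have S: "mexp ((\<i> * of_real (\<epsilon> / 2)) \<cdot>\<^sub>m P) \<in> carrier_mat (d ^ N) (d ^ N)"
    by (rule mexp_carrier) (use P in simp)
  show ?thesis unfolding half_Stilde_def using V S cadj_carrier[OF V] by (meson mult_carrier_mat)
qed

lemma heis_one:
  assumes H: "H \<in> carrier_mat d d"
  shows "heis H s (1\<^sub>m d) = 1\<^sub>m d"
proof -
  have c: "mexp ((\<i> * of_real s) \<cdot>\<^sub>m H) \<in> carrier_mat d d" by (rule mexp_carrier) (use H in simp)
  have "heis H s (1\<^sub>m d) = mexp ((\<i> * of_real s) \<cdot>\<^sub>m H) * mexp ((- \<i> * of_real s) \<cdot>\<^sub>m H)"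
    unfolding heis_def using c by simp
  also have "\<dots> = mexp ((\<i> * of_real s + (- \<i> * of_real s)) \<cdot>\<^sub>m H)" by (rule mexp_add_smult[OF H])
  also have "\<dots> = 1\<^sub>m d" using mexp_zero[OF H] by simp
  finally show ?thesis .
qed

lemma time_ordered_one:
  assumes H: "H \<in> carrier_mat d d"
  shows "time_ordered d N \<epsilon> H (\<lambda>_. 1\<^sub>m d) = 1\<^sub>m d"
proof -
  have "foldr (\<lambda>t M. 1\<^sub>m d * M) xs (1\<^sub>m d) = (1\<^sub>m d :: complex mat)" for xs
    by (induction xs) (auto simp: left_mult_one_mat[OF one_carrier_mat])
  then show ?thesis unfolding time_ordered_def heis_one[OF H] .
qed

theorem corollary2:
  fixes d N :: nat and \<epsilon> :: real and H P \<rho> :: "complex mat"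
    and Ops :: "nat \<Rightarrow> complex mat"
  assumes "d \<ge> 1" and "N \<ge> 1" and "\<epsilon> > 0"
    and "H \<in> carrier_mat d d" and "hermitian H"
    and "P \<in> carrier_mat (d ^ N) (d ^ N)" and "hermitian P"
    and "mexp ((\<i> * of_real \<epsilon>) \<cdot>\<^sub>m P) = cshift d N"
    and "\<rho> \<in> carrier_mat d d" and "psd \<rho>" and "Re (ctrace \<rho>) > 0"
    and "\<forall>t<N. Ops t \<in> carrier_mat d d"
  shows
    "let D = d ^ N;
         \<rho>0 = on_slice d N 0 \<rho>;
         U = half_Stilde d N \<epsilon> H P;
         \<Psi> = kron (\<rho>0 * U) (1\<^sub>m D) *\<^sub>v phi_plus D;
         \<Psi>bar = cadj (kron U (1\<^sub>m D)) *\<^sub>v phi_plus D;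
         R = (1 / braket \<Psi>bar \<Psi>) \<cdot>\<^sub>m ket_bra \<Psi> \<Psi>bar;
         X = kron (tensor_ops d N Ops) (1\<^sub>m D)
     in ctrace (R * X) = braket \<Psi>bar (X *\<^sub>v \<Psi>) / braket \<Psi>bar \<Psi>
      \<and> braket \<Psi>bar (X *\<^sub>v \<Psi>) / braket \<Psi>bar \<Psi>
          = ctrace (\<rho> * time_ordered d N \<epsilon> H Ops) / ctrace \<rho>"
proof -
  note d = assms(1) and N = assms(2) and H = assms(4) and h = assms(5) and P = assms(6)
    and C = assms(8) and r = assms(9) and O = assms(12)
  define D where "D = d ^ N"
  define \<rho>0 where "\<rho>0 = on_slice d N 0 \<rho>"
  define U where "U = half_Stilde d N \<epsilon> H P"
  define Y where "Y = tensor_ops d N Ops"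
  define \<Psi> where "\<Psi> = kron (\<rho>0 * U) (1\<^sub>m D) *\<^sub>v phi_plus D"
  define \<Psi>bar where "\<Psi>bar = cadj (kron U (1\<^sub>m D)) *\<^sub>v phi_plus D"
  define X where "X = kron Y (1\<^sub>m D)"
  have Uc: "U \<in> carrier_mat D D" unfolding U_def D_def by (rule half_Stilde_carrier[OF d H P])
  have r0c: "\<rho>0 \<in> carrier_mat D D" unfolding \<rho>0_def D_def by simp
  have Yc: "Y \<in> carrier_mat D D" unfolding Y_def D_def by simp
  have r0U: "\<rho>0 * U \<in> carrier_mat D D" using r0c Uc by simp
  have YrU: "Y * (\<rho>0 * U) \<in> carrier_mat D D" using Yc r0U by simp
  have Psi: "\<Psi> = vecm D (\<rho>0 * U)"
    unfolding \<Psi>_def phi_plus_vecm kron_vecm[OF r0U one_carrier_mat] right_mult_one_mat[OF r0U] ..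
  have XPsi: "X *\<^sub>v \<Psi> = vecm D (Y * (\<rho>0 * U))"
    unfolding X_def Psi by (rule kron_vecm[OF Yc r0U])
  have num: "braket \<Psi>bar (X *\<^sub>v \<Psi>) = ctrace (\<rho> * time_ordered d N \<epsilon> H Ops)"
  proof -
    have "braket \<Psi>bar (X *\<^sub>v \<Psi>) = ctrace (U * (Y * (\<rho>0 * U)))"
      unfolding XPsi \<Psi>bar_def by (rule braket_vecm[OF Uc YrU])
    also have "\<dots> = ctrace (\<rho> * time_ordered d N \<epsilon> H Ops)"
      unfolding U_def Y_def \<rho>0_def by (rule main_trace[OF d N H h P C r O])
    finally show ?thesis .
  qed
  have den: "braket \<Psi>bar \<Psi> = ctrace \<rho>"
  proof -
    have "braket \<Psi>bar \<Psi> = ctrace (U * (\<rho>0 * U))"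
      unfolding Psi \<Psi>bar_def by (rule braket_vecm[OF Uc r0U])
    also have "\<dots> = ctrace (U * (tensor_ops d N (\<lambda>_. 1\<^sub>m d) * (\<rho>0 * U)))"
      using tensor_ops_one[OF d] left_mult_one_mat[OF r0U] by (simp add: D_def)
    also have "\<dots> = ctrace (\<rho> * time_ordered d N \<epsilon> H (\<lambda>_. 1\<^sub>m d))"
      unfolding U_def \<rho>0_def by (rule main_trace[OF d N H h P C r]) simp
    also have "\<dots> = ctrace \<rho>" using r by (simp add: time_ordered_one[OF H])
    finally show ?thesis .
  qed
  have dims: "dim_vec \<Psi> = D * D" "dim_vec \<Psi>bar = D * D"
    using Uc by (auto simp: Psi vecm_def \<Psi>bar_def cadj_def)
  have Xc: "X \<in> carrier_mat (D * D) (D * D)" using Yc by (simp add: X_def kron_def)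
  have tr: "ctrace (((1 / braket \<Psi>bar \<Psi>) \<cdot>\<^sub>m ket_bra \<Psi> \<Psi>bar) * X) = (1 / braket \<Psi>bar \<Psi>) * braket \<Psi>bar (X *\<^sub>v \<Psi>)"
    by (rule ctrace_ket_bra[OF Xc dims])
  show ?thesis
    unfolding Let_def D_def[symmetric] \<rho>0_def[symmetric] U_def[symmetric] Y_def[symmetric]
      \<Psi>_def[symmetric] \<Psi>bar_def[symmetric] X_def[symmetric]
    using tr num den by simp
qed

end
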